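(* For every Hausdorff topological vector space $\mathcal X$ over $\mathbb K$, the exponential vector space $\mathcal C(\mathcal X)$ has a basis, i.e. $\mathcal C(\mathcal X)\smallsetminus[\mathcal C(\mathcal X)]_0$ has a basis.
   Context: $\mathbb K$ is $\mathbb R$ or $\mathbb C$. An exponential vector space (evs) over a field $K$ is a partially ordered set $(X,\leq)$ with a binary operation $+$ on $X$ and a map $K\times X\to X$, $(\alpha,x)\mapsto \alpha x$, such that: (A1) $(X,+)$ is a commutative semigroup with identity $\theta$; (A2) $x\leq y$ implies $x+z\leq y+z$ and $\alpha x\leq \alpha y$ for all $z\in X$, $\alpha\in K$; (A3) $\alpha(x+y)=\alpha x+\alpha y$, $\alpha(\beta x)=(\alpha\beta)x$, $(\alpha+\beta)x\leq \alpha x+\beta x$, $1x=x$; (A4) $\alpha x=\theta$ iff $\alpha=0$ or $x=\theta$; (A5) $x+(-1)x=\theta$ iff $x\in X_0$, where $X_0:=\{z\in X: y\not\leq z \text{ for all } y\in X\smallsetminus\{z\}\}$ (the set of minimal elements); (A6) for each $x\in X$ there is $p\in X_0$ with $p\leq x$. $\mathcal C(\mathcal X)$ is the set of nonempty compact subsets of $\mathcal X$ with $A+B:=\{a+b:a\in A,b\in B\}$, $\alpha A:=\{\alpha a:a\in A\}$, and order given by set inclusion; it is an evs over $\mathbb K$ whose primitive space consists of the singletons. For $x\in X\smallsetminus X_0$ let $L(x):=\{z\in X: z\geq \alpha x+p \text{ for some } \alpha\in K\smallsetminus\{0\},\ p\in X_0\}$. A subset $B\subseteq X\smallsetminus X_0$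 generates $X\smallsetminus X_0$ if $X\smallsetminus X_0=\bigcup_{b\in B}L(b)$. Elements $x,y\in X\smallsetminus X_0$ are orderly dependent if $x\in L(y)$ or $y\in L(x)$, and orderly independent otherwise; $B$ is orderly independent if any two distinct members are orderly independent. A basis of $X\smallsetminus X_0$ is an orderly independent generating subset. *)

theory Defs
  imports "HOL-Analysis.Analysis"
begin

definition tvs :: "('k::real_normed_field \<Rightarrow> 'v::{ab_group_add,topological_space} \<Rightarrow> 'v) \<Rightarrow> bool" where
  "tvs s \<longleftrightarrow> Vector_Spaces.vector_space s
     \<and> continuous_on UNIV (\<lambda>p::'v \<times> 'v. fst p + snd p)
     \<and> continuous_on UNIV (\<lambda>p::'k \<times> 'v. s (fst p) (snd p))"

text \<open>The exponential vector space C(X): nonempty compact subsets, ordered by inclusion.\<close>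
definition CX :: "'v::{plus,topological_space} set set" where
  "CX = {A. A \<noteq> {} \<and> compact A}"

definition set_add :: "'v::plus set \<Rightarrow> 'v set \<Rightarrow> 'v set" where
  "set_add A B = {a + b | a b. a \<in> A \<and> b \<in> B}"

definition set_smul :: "('k \<Rightarrow> 'v \<Rightarrow> 'v) \<Rightarrow> 'k \<Rightarrow> 'v set \<Rightarrow> 'v set" where
  "set_smul s \<alpha> A = (s \<alpha>) ` A"

definition CX0 :: "'v::{plus,topological_space} set set" where
  "CX0 = {z \<in> CX. \<forall>y \<in> CX. y \<subseteq> z \<longrightarrow> y = z}"

definition Lset :: "('k::zero \<Rightarrow> 'v::{plus,topological_space} \<Rightarrow> 'v) \<Rightarrow> 'v set \<Rightarrow> 'v set set" where
  "Lset s x = {z \<in> CX. \<exists>\<alpha> p. \<alpha> \<noteq> 0 \<and> p \<in> CX0 \<and> set_add (set_smul s \<alpha> x) p \<subseteq> z}"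

definition generates :: "('k::zero \<Rightarrow> 'v::{plus,topological_space} \<Rightarrow> 'v) \<Rightarrow> 'v set set \<Rightarrow> bool" where
  "generates s B \<longleftrightarrow> B \<subseteq> CX - CX0 \<and> CX - CX0 = (\<Union>b\<in>B. Lset s b)"

definition orderly_dependent :: "('k::zero \<Rightarrow> 'v::{plus,topological_space} \<Rightarrow> 'v) \<Rightarrow> 'v set \<Rightarrow> 'v set \<Rightarrow> bool" where
  "orderly_dependent s x y \<longleftrightarrow> x \<in> Lset s y \<or> y \<in> Lset s x"

definition orderly_independent_set :: "('k::zero \<Rightarrow> 'v::{plus,topological_space} \<Rightarrow> 'v) \<Rightarrow> 'v set set \<Rightarrow> bool" where
  "orderly_independent_set s B \<longleftrightarrow> (\<forall>x\<in>B. \<forall>y\<in>B. x \<noteq> y \<longrightarrow> \<not> orderly_dependent s x y)"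

definition is_basis_CX :: "('k::zero \<Rightarrow> 'v::{plus,topological_space} \<Rightarrow> 'v) \<Rightarrow> 'v set set \<Rightarrow> bool" where
  "is_basis_CX s B \<longleftrightarrow> B \<subseteq> CX - CX0 \<and> orderly_independent_set s B \<and> generates s B"

end

theory Submission
  imports Defs
begin

lemma CX0_iff: "z \<in> CX0 \<longleftrightarrow> (\<exists>c. z = {c})"
proof
  assume z: "z \<in> CX0"
  then have "z \<noteq> {}" by (simp add: CX0_def CX_def)
  then obtain c where c: "c \<in> z" by blast
  have "{c} \<in> CX" by (simp add: CX_def)
  with z c show "\<exists>c. z = {c}" unfolding CX0_def by blast
next
  assume "\<exists>c. z = {c}"
  then obtain c where "z = {c}" by blast
  then show "z \<in> CX0" unfolding CX0_def CX_def by auto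
qed

lemma set_add_single: "set_add A {a} = (\<lambda>x. x + a) ` A"
  unfolding set_add_def by auto

lemma generic:
  fixes s :: "'k::field \<Rightarrow> 'v::{ab_group_add,topological_space} \<Rightarrow> 'v"
  assumes vs: "Vector_Spaces.vector_space s"
  shows "\<exists>B. is_basis_CX s B"
proof -
  interpret vector_space s by (rule vs)
  define eqv where "eqv = (\<lambda>u w. \<exists>\<beta>. \<beta> \<noteq> 0 \<and> u = s \<beta> w)"
  have refl: "eqv u u" for u unfolding eqv_def by (rule exI[of _ 1]) simp
  have eqv_sym: "eqv w u" if "eqv u w" for u w
  proof -
    have "\<exists>\<beta>. \<beta> \<noteq> 0 \<and> u = s \<beta> w" using that(1) unfolding eqv_def .
    then obtain \<beta> where bb: "\<beta> \<noteq> 0 \<and> u = s \<beta> w" by (rule exE)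
    have b1: "\<beta> \<noteq> 0" using bb by (rule conjunct1)
    have b2: "u = s \<beta> w" using bb by (rule conjunct2)
    have "s (inverse \<beta>) u = s (inverse \<beta> * \<beta>) w" unfolding b2 by (rule scale_scale)
    also have "\<dots> = w" using b1 by simp
    finally have "w = s (inverse \<beta>) u" by (rule sym)
    moreover have "inverse \<beta> \<noteq> 0" using b1 by (rule nonzero_imp_inverse_nonzero)
    ultimately have "inverse \<beta> \<noteq> 0 \<and> w = s (inverse \<beta>) u" by (intro conjI)
    then show ?thesis unfolding eqv_def by (rule exI)
  qed
  have eqv_trans: "eqv u x" if "eqv u w" "eqv w x" for u w x
  proof -
    have "\<exists>\<beta>. \<beta> \<noteq> 0 \<and> u = s \<beta> w" using that(1) unfolding eqv_def .
    then obtain \<beta> where bb: "\<beta> \<noteq> 0 \<and> u = s \<beta> w" by (rule exE)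
    have "\<exists>\<beta>. \<beta> \<noteq> 0 \<and> w = s \<beta> x" using that(2) unfolding eqv_def .
    then obtain \<gamma> where cc: "\<gamma> \<noteq> 0 \<and> w = s \<gamma> x" by (rule exE)
    have "u = s (\<beta> * \<gamma>) x" using bb cc by (simp only: scale_scale)
    moreover have "\<beta> * \<gamma> \<noteq> 0" using bb cc by simp
    ultimately have "\<beta> * \<gamma> \<noteq> 0 \<and> u = s (\<beta> * \<gamma>) x" by (intro conjI)
    then show ?thesis unfolding eqv_def by (rule exI)
  qed
  define rep where "rep = (\<lambda>u. SOME r. eqv r u)"
  have rep: "eqv (rep u) u" for u unfolding rep_def by (rule someI[of _ u]) (rule refl)
  have rep_eq: "rep u = rep w" if "eqv u w" for u w
  proof -
    have "(\<lambda>r. eqv r u) = (\<lambda>r. eqv r w)"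
    proof (intro ext iffI)
      fix r assume "eqv r u" then show "eqv r w" by (rule eqv_trans[OF _ that])
    next
      fix r assume "eqv r w" then show "eqv r u" by (rule eqv_trans[OF _ eqv_sym[OF that]])
    qed
    then show ?thesis unfolding rep_def by simp
  qed
  have rep_nz: "rep u \<noteq> 0" if "u \<noteq> 0" for u
    using rep[of u] that unfolding eqv_def by auto
  define B where "B = {{0, rep u} | u. u \<noteq> 0}"
  have inB: "B \<subseteq> CX - CX0"
  proof
    fix x assume "x \<in> B"
    then obtain u where u: "u \<noteq> 0" "x = {0, rep u}" unfolding B_def by blast
    have "x \<in> CX" unfolding CX_def using u by auto
    moreover have "x \<notin> CX0"
    proof
      assume "x \<in> CX0"
      then obtain c where "x = {c}" using CX0_iff by blast
      then have "0 \<in> {c}" "rep u \<in> {c}" using u by auto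
      then show False using rep_nz[OF u(1)] by auto
    qed
    ultimately show "x \<in> CX - CX0" by blast
  qed
  have gen: "CX - CX0 \<subseteq> (\<Union>b\<in>B. Lset s b)"
  proof
    fix z :: "'v set" assume z: "z \<in> CX - CX0"
    then have zc: "z \<in> CX" and ne: "z \<noteq> {}" by (auto simp: CX_def)
    obtain a where a: "a \<in> z" using ne by blast
    obtain b where b: "b \<in> z" "b \<noteq> a"
      using z a CX0_iff by blast
    define u where "u = b - a"
    have u: "u \<noteq> 0" using b u_def by simp
    obtain \<gamma> where g: "\<gamma> \<noteq> 0" "u = s \<gamma> (rep u)" using eqv_sym[OF rep[of u]] unfolding eqv_def by blast
    have "set_add (set_smul s \<gamma> {0, rep u}) {a} = {a, b}"
    proof -
      have "set_smul s \<gamma> {0, rep u} = {0, u}" unfolding set_smul_def using g(2) by simp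
      then show ?thesis unfolding set_add_single u_def by simp
    qed
    moreover have "{a, b} \<subseteq> z" using a b by blast
    moreover have "{a} \<in> CX0" using CX0_iff by blast
    ultimately have "z \<in> Lset s {0, rep u}"
      unfolding Lset_def using zc g(1) by blast
    moreover have "{0, rep u} \<in> B" unfolding B_def using u by blast
    ultimately show "z \<in> (\<Union>b\<in>B. Lset s b)" by blast
  qed
  have gen2: "(\<Union>b\<in>B. Lset s b) \<subseteq> CX - CX0"
  proof
    fix z :: "'v set" assume "z \<in> (\<Union>b\<in>B. Lset s b)"
    then obtain u \<alpha> p where u: "u \<noteq> 0" and z: "z \<in> CX" "\<alpha> \<noteq> 0" "p \<in> CX0"
      "set_add (set_smul s \<alpha> {0, rep u}) p \<subseteq> z"
      unfolding B_def Lset_def by blast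
    obtain c where c: "p = {c}" using z CX0_iff by blast
    have "c \<in> z" "s \<alpha> (rep u) + c \<in> z"
      using z(4) unfolding c set_add_def set_smul_def by auto
    moreover have "s \<alpha> (rep u) + c \<noteq> c" using z(2) rep_nz[OF u] by simp
    ultimately have "z \<notin> CX0" unfolding CX0_iff by force
    then show "z \<in> CX - CX0" using z by blast
  qed
  have indep: "orderly_independent_set s B"
    unfolding orderly_independent_set_def
  proof (intro ballI impI)
    have key: "x = y" if "x \<in> B" "y \<in> B" "x \<in> Lset s y" for x y
    proof -
      have "\<exists>u. x = {0, rep u} \<and> u \<noteq> 0" using that(1) unfolding B_def by (rule CollectD)
      then obtain u where uu: "x = {0, rep u} \<and> u \<noteq> 0" by (rule exE)
      have u: "u \<noteq> 0" "x = {0, rep u}" using uu by simp_all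
      have "\<exists>w. y = {0, rep w} \<and> w \<noteq> 0" using that(2) unfolding B_def by (rule CollectD)
      then obtain w where ww: "y = {0, rep w} \<and> w \<noteq> 0" by (rule exE)
      have w: "w \<noteq> 0" "y = {0, rep w}" using ww by simp_all
      have "x \<in> CX \<and> (\<exists>\<alpha> p. \<alpha> \<noteq> 0 \<and> p \<in> CX0 \<and> set_add (set_smul s \<alpha> y) p \<subseteq> x)"
        using that(3) unfolding Lset_def by (rule CollectD)
      then have "\<exists>\<alpha> p. \<alpha> \<noteq> 0 \<and> p \<in> CX0 \<and> set_add (set_smul s \<alpha> y) p \<subseteq> x" by (rule conjunct2)
      then obtain \<alpha> p where app: "\<alpha> \<noteq> 0 \<and> p \<in> CX0 \<and> set_add (set_smul s \<alpha> y) p \<subseteq> x"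
        by (elim exE)
      have ap: "\<alpha> \<noteq> 0" "p \<in> CX0" "set_add (set_smul s \<alpha> y) p \<subseteq> x" using app by simp_all
      have "\<exists>c. p = {c}" using ap(2) unfolding CX0_iff .
      then obtain c where c: "p = {c}" by (rule exE)
      have m: "c \<in> {0, rep u}" "s \<alpha> (rep w) + c \<in> {0, rep u}"
        using ap(3) unfolding c w u set_add_def set_smul_def by auto
      have ne: "s \<alpha> (rep w) + c \<noteq> c" using ap(1) rep_nz[OF w(1)] by simp
      have "eqv (rep u) (rep w)"
      proof (cases "c = 0")
        case True
        then have "s \<alpha> (rep w) = rep u" using m ne by auto
        then have "rep u = s \<alpha> (rep w)" by (rule HOL.sym)
        with ap(1) have "\<alpha> \<noteq> 0 \<and> rep u = s \<alpha> (rep w)" by (rule conjI)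
        then show ?thesis unfolding eqv_def by (rule exI)
      next
        case False
        then have cc: "c = rep u" and "s \<alpha> (rep w) + c = 0" using m ne by auto
        then have "rep u = s (- \<alpha>) (rep w)"
          by (metis add_eq_0_iff scale_minus_left)
        moreover have "- \<alpha> \<noteq> 0" using ap(1) by simp
        ultimately have "- \<alpha> \<noteq> 0 \<and> rep u = s (- \<alpha>) (rep w)" by (intro conjI)
        then show ?thesis unfolding eqv_def by (rule exI)
      qed
      then have "eqv u (rep w)" by (rule eqv_trans[OF eqv_sym[OF rep[of u]]])
      then have "eqv u w" by (rule eqv_trans) (rule rep)
      then show "x = y" using rep_eq u w by simp
    qed
    fix x y assume "x \<in> B" "y \<in> B" "x \<noteq> y"
    show "\<not> orderly_dependent s x y"
      unfolding orderly_dependent_def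
    proof
      assume "x \<in> Lset s y \<or> y \<in> Lset s x"
      then show False
      proof
        assume "x \<in> Lset s y"
        then have "x = y" by (rule key[OF \<open>x \<in> B\<close> \<open>y \<in> B\<close>])
        then show False using \<open>x \<noteq> y\<close> by (rule notE[rotated])
      next
        assume "y \<in> Lset s x"
        then have "y = x" by (rule key[OF \<open>y \<in> B\<close> \<open>x \<in> B\<close>])
        then show False using \<open>x \<noteq> y\<close> by simp
      qed
    qed
  qed
  show ?thesis
    unfolding is_basis_CX_def generates_def
  proof (intro exI[of _ B] conjI)
    show "CX - CX0 = (\<Union>b\<in>B. Lset s b)" using gen gen2 by (rule subset_antisym)
  qed (fact inB indep)+
qed

theorem mainTheorem11:
  shows "(\<forall>s :: real \<Rightarrow> 'a::{ab_group_add,t2_space} \<Rightarrow> 'a. tvs s \<longrightarrow> (\<exists>B. is_basis_CX s B))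
       \<and> (\<forall>s :: complex \<Rightarrow> 'b::{ab_group_add,t2_space} \<Rightarrow> 'b. tvs s \<longrightarrow> (\<exists>B. is_basis_CX s B))"
  unfolding tvs_def by (auto intro: generic)

end
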